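(* Let $M>5$. The ideology $\mu_{fr}(q,M)$ of the fringe media organization becomes weakly more extreme (i.e. is weakly decreasing) as the strength of confirmation bias $q\in[0,1]$ increases.
   Context: There are $M$ media organizations; each chooses an ideology $\mu_m\in[0,1]$ (fixed thereafter) to maximize its audience, the mass of agents who listen to it. Agents' initial beliefs $x_{i0}$ are i.i.d. draws from $U[0,1]$. Each agent listens to (forms a costless link of small weight with) exactly one media organization, namely the one whose ideology is closest to her belief, except that under confirmation bias of strength $q$ agent $i$ listens to organization $m$ only if $|x_{i0}-\mu_m|\le 1-q$. An equilibrium is a profile of ideologies $(\mu_1,\dots,\mu_M)$ from which no organization can profitably deviate; $\Psi^q_M$ is the set of equilibria. The fringe media organization's ideology is $\mu_{fr}(q,M)=\min\{\mu_m:\mu_m\text{ an ideology in some equilibrium in }\Psi^q_M\}$, the most extreme (left) equilibrium ideology. *)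

theory Defs
  imports "HOL-Analysis.Analysis"
begin

text \<open>Agents' beliefs are uniform on [0,1] (Lebesgue measure).
  An agent at x listens to m if m is (weakly) closest and within distance 1-q;
  organizations located at the same ideology share their common audience equally
  (ties between distinct locations occur on a null set).\<close>

definition valid_profile :: "nat \<Rightarrow> (nat \<Rightarrow> real) \<Rightarrow> bool" where
  "valid_profile M \<mu> \<longleftrightarrow> (\<forall>m<M. 0 \<le> \<mu> m \<and> \<mu> m \<le> 1)"

definition audience :: "real \<Rightarrow> nat \<Rightarrow> (nat \<Rightarrow> real) \<Rightarrow> nat \<Rightarrow> real" where
  "audience q M \<mu> m =
     measure lborel {x \<in> {0..1}. \<bar>x - \<mu> m\<bar> \<le> 1 - q \<and> (\<forall>j<M. \<bar>x - \<mu> m\<bar> \<le> \<bar>x - \<mu> j\<bar>)}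
     / real (card {j. j < M \<and> \<mu> j = \<mu> m})"

definition equilibrium :: "real \<Rightarrow> nat \<Rightarrow> (nat \<Rightarrow> real) \<Rightarrow> bool" where
  "equilibrium q M \<mu> \<longleftrightarrow> valid_profile M \<mu> \<and>
     (\<forall>m<M. \<forall>y\<in>{0..1}. audience q M (\<mu>(m := y)) m \<le> audience q M \<mu> m)"

definition Psi :: "real \<Rightarrow> nat \<Rightarrow> (nat \<Rightarrow> real) set" where
  "Psi q M = {\<mu>. equilibrium q M \<mu>}"

definition mu_fr :: "real \<Rightarrow> nat \<Rightarrow> real" where
  "mu_fr q M = Inf {\<mu> m | \<mu> m. \<mu> \<in> Psi q M \<and> m < M}"

end

theory Submission
  imports Defs
begin

definition aset :: "real \<Rightarrow> nat \<Rightarrow> (nat \<Rightarrow> real) \<Rightarrow> nat \<Rightarrow> real set" where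
  "aset q M \<mu> m = {x \<in> {0..1}. \<bar>x - \<mu> m\<bar> \<le> 1 - q \<and> (\<forall>j<M. \<bar>x - \<mu> m\<bar> \<le> \<bar>x - \<mu> j\<bar>)}"

lemma audience_aset: "audience q M \<mu> m = measure lborel (aset q M \<mu> m) / real (card {j. j < M \<and> \<mu> j = \<mu> m})"
  unfolding audience_def aset_def by simp

lemma aset_closed: "closed (aset q M \<mu> m)"
proof -
  have "aset q M \<mu> m = {0..1} \<inter> {x. \<bar>x - \<mu> m\<bar> \<le> 1 - q} \<inter> (\<Inter>j\<in>{..<M}. {x. \<bar>x - \<mu> m\<bar> \<le> \<bar>x - \<mu> j\<bar>})"
    unfolding aset_def by auto
  also have "closed \<dots>"
  proof (intro closed_Int closed_INT ballI)
    show "closed {x::real. \<bar>x - \<mu> m\<bar> \<le> 1 - q}"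
      by (rule closed_Collect_le) (auto intro!: continuous_intros)
    fix j show "closed {x::real. \<bar>x - \<mu> m\<bar> \<le> \<bar>x - \<mu> j\<bar>}"
      by (rule closed_Collect_le) (auto intro!: continuous_intros)
  qed auto
  finally show ?thesis .
qed

lemma aset_sub01: "aset q M \<mu> m \<subseteq> {0..1}"
  unfolding aset_def by auto

lemma aset_compact: "compact (aset q M \<mu> m)"
  using bounded_subset[OF bounded_closed_interval aset_sub01] aset_closed
  by (auto simp: compact_eq_bounded_closed)

lemma aset_sets: "aset q M \<mu> m \<in> sets lborel"
  using aset_closed by (simp add: borel_closed)


lemma meas_le_interval:
  assumes "A \<subseteq> {lo..hi}" "A \<in> sets lborel" "lo \<le> hi"
  shows "measure lborel A \<le> hi - lo"
proof -
  have "measure lborel A \<le> measure lborel {lo..hi}"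
    by (rule measure_mono_fmeasurable) (use assms in \<open>auto intro: fmeasurable_compact\<close>)
  then show ?thesis using assms by simp
qed

lemma aset_le:
  assumes "aset q M \<mu> m \<subseteq> {lo..hi}" "lo \<le> hi"
  shows "measure lborel (aset q M \<mu> m) \<le> hi - lo"
  using meas_le_interval[OF assms(1) aset_sets assms(2)] .

lemma aset_ge:
  assumes "{lo..hi} \<subseteq> aset q M \<mu> m"
  shows "hi - lo \<le> measure lborel (aset q M \<mu> m)"
proof (cases "lo \<le> hi")
  case True
  have "measure lborel {lo..hi} \<le> measure lborel (aset q M \<mu> m)"
    apply (rule measure_mono_fmeasurable) using assms aset_sub01[of q M \<mu> m] aset_sets[of q M \<mu> m]
    by (auto intro!: fmeasurable_compact simp: compact_eq_bounded_closed aset_closed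
         intro: bounded_subset[of "{0..1}", OF bounded_closed_interval])
  then show ?thesis using True by simp
next
  case False
  have "0 \<le> measure lborel (aset q M \<mu> m)" by simp
  then show ?thesis using False by linarith
qed

lemma card_fiber_pos: "(m::nat) < M \<Longrightarrow> 1 \<le> card {j. j < M \<and> \<mu> j = \<mu> m}"
proof -
  assume "m < M"
  then have "{j. j < M \<and> \<mu> j = \<mu> m} \<noteq> {}" by auto
  moreover have "finite {j. j < M \<and> \<mu> j = \<mu> m}" by (rule finite_subset[of _ "{..<M}"]) auto
  ultimately show ?thesis by (simp add: Suc_le_eq card_gt_0_iff)
qed

lemma audience_le_meas: "m < M \<Longrightarrow> audience q M \<mu> m \<le> measure lborel (aset q M \<mu> m)"
proof -
  assume "m < M"
  from card_fiber_pos[OF this, of \<mu>] have c: "1 \<le> real (card {j. j < M \<and> \<mu> j = \<mu> m})" by simp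
  have "0 \<le> measure lborel (aset q M \<mu> m)" by simp
  then show ?thesis unfolding audience_aset using c
    using divide_left_mono[of 1 "real (card {j. j < M \<and> \<mu> j = \<mu> m})" "measure lborel (aset q M \<mu> m)"] by simp
qed

lemma audience_single:
  assumes "m < M" "\<And>j. j < M \<Longrightarrow> \<mu> j = \<mu> m \<Longrightarrow> j = m"
  shows "audience q M \<mu> m = measure lborel (aset q M \<mu> m)"
proof -
  have "{j. j < M \<and> \<mu> j = \<mu> m} = {m}" using assms by auto
  then show ?thesis unfolding audience_aset by simp
qed

lemma audience_nonneg: "0 \<le> audience q M \<mu> m"
  unfolding audience_aset by simp

lemma eq_dev:
  assumes "equilibrium q M \<mu>" "m < M" "0 \<le> y" "y \<le> 1"
  shows "audience q M (\<mu>(m := y)) m \<le> audience q M \<mu> m"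
  using assms unfolding equilibrium_def by auto

lemmas dd = add_divide_distrib diff_divide_distrib

lemma aset_memD:
  assumes "x \<in> aset q M \<mu> m"
  shows "0 \<le> x" "x \<le> 1" "\<bar>x - \<mu> m\<bar> \<le> 1 - q" "\<And>j. j < M \<Longrightarrow> \<bar>x - \<mu> m\<bar> \<le> \<bar>x - \<mu> j\<bar>"
  using assms unfolding aset_def by auto

lemma aset_upd_memI:
  assumes "0 \<le> x" "x \<le> 1" "\<bar>x - y\<bar> \<le> 1 - q" "\<And>i. i < M \<Longrightarrow> i \<noteq> m \<Longrightarrow> \<bar>x - y\<bar> \<le> \<bar>x - \<mu> i\<bar>"
  shows "x \<in> aset q M (\<mu>(m := y)) m"
  using assms unfolding aset_def by auto

lemma audience_upd_single:
  assumes "(m::nat) < M" "\<And>i. i < M \<Longrightarrow> i \<noteq> m \<Longrightarrow> \<mu> i \<noteq> y"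
  shows "audience q M (\<mu>(m := y)) m = measure lborel (aset q M (\<mu>(m := y)) m)"
  using assms by (intro audience_single) (auto split: if_splits)

lemma eps_le:
  fixes a b :: real
  assumes "d > 0" "\<And>e. 0 < e \<Longrightarrow> e < d \<Longrightarrow> a \<le> b + e"
  shows "a \<le> b"
proof (rule ccontr)
  assume "\<not> a \<le> b"
  define e where "e = min (d/2) ((a - b)/2)"
  have "0 < e" "e < d" using assms \<open>\<not> a \<le> b\<close> by (auto simp: e_def)
  from assms(2)[OF this] have "a \<le> b + e" .
  moreover have "e \<le> (a - b)/2" unfolding e_def by (rule min.cobounded2)
  ultimately show False using \<open>\<not> a \<le> b\<close> by argo
qed

locale lb =
  fixes q :: real and M :: nat and \<mu> :: "nat \<Rightarrow> real" and m0 :: nat and c r :: real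
  assumes eq: "equilibrium q M \<mu>" and q0: "0 \<le> q" and q1: "q \<le> 1" and M5: "M > 5"
    and m0M: "m0 < M" and cdef: "\<mu> m0 = c" and rdef: "r = 1 - q"
    and cmin: "\<And>j. j < M \<Longrightarrow> c \<le> \<mu> j"
    and cr: "c < r" and ca: "c < 1 / (2 * (real M - 2))"
begin

lemma valid: "j < M \<Longrightarrow> 0 \<le> \<mu> j \<and> \<mu> j \<le> 1"
  using eq unfolding equilibrium_def valid_profile_def by auto

lemma c_small: "c < 1/8" "0 \<le> c"
proof -
  have "real M \<ge> 6" using M5 by simp
  then have "1 / (2 * (real M - 2)) \<le> 1/8" by (simp add: field_simps)
  then show "c < 1/8" using ca by linarith
  show "0 \<le> c" using valid[OF m0M] cdef by simp
qed

lemma step1: "\<exists>j1<M. j1 \<noteq> m0 \<and> \<mu> j1 = c"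
proof (rule ccontr)
  assume "\<not> ?thesis"
  then have single: "\<And>j. j < M \<Longrightarrow> j \<noteq> m0 \<Longrightarrow> \<mu> j \<noteq> c" by auto
  define Oth where "Oth = {\<mu> j | j. j < M \<and> j \<noteq> m0}"
  have Othfin: "finite Oth" unfolding Oth_def by simp
  have "\<exists>j<M. j \<noteq> m0" by (rule exI[of _ "if m0 = 0 then 1 else 0"]) (use M5 m0M in auto)
  then have Othne: "Oth \<noteq> {}" unfolding Oth_def by auto
  define p2 where "p2 = Min Oth"
  have "p2 \<in> Oth" unfolding p2_def using Othfin Othne by simp
  then obtain j2 where j2: "j2 < M" "j2 \<noteq> m0" "\<mu> j2 = p2" unfolding Oth_def by auto
  have p2le: "\<And>j. j < M \<Longrightarrow> j \<noteq> m0 \<Longrightarrow> p2 \<le> \<mu> j"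
    unfolding p2_def Oth_def by (rule Min_le) (use Othfin[unfolded Oth_def] in auto)
  have p2c: "c < p2" using cmin[OF j2(1)] single[OF j2(1,2)] j2 by auto
  have p21: "p2 \<le> 1" using valid[OF j2(1)] j2 by simp
  define e where "e = min (r - c) (p2 - c) / 2"
  have e0: "0 < e" using cr p2c by (simp add: e_def)
  define y where "y = c + e"
  have yr: "y \<le> r" "y < p2" "0 \<le> y" "y \<le> 1"
    using cr p2c p21 c_small unfolding y_def e_def by (auto simp: min_def dd)
  define R where "R = min 1 (min (c + r) ((c + p2)/2))"
  define Ry where "Ry = min 1 (min (y + r) ((y + p2)/2))"
  have "(c + p2)/2 < 1" using p21 c_small by (simp add: dd)
  then have R1: "R < 1" by (simp add: R_def min_less_iff_disj)
  have RRy: "R < Ry" using R1 e0 unfolding R_def Ry_def y_def by (simp add: min_def)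
  have R0: "0 \<le> R" using c_small cr p2c unfolding R_def by simp
  have sub1: "aset q M \<mu> m0 \<subseteq> {0..R}"
  proof
    fix x assume x: "x \<in> aset q M \<mu> m0"
    note d = aset_memD[OF x]
    have "\<bar>x - c\<bar> \<le> \<bar>x - p2\<bar>" using d(4)[OF j2(1)] j2 cdef by simp
    then have "x \<le> (c + p2)/2" using p2c by (auto simp: abs_if split: if_splits)
    then show "x \<in> {0..R}" using d(1,2,3) cdef rdef by (auto simp: R_def)
  qed
  have sub2: "{0..Ry} \<subseteq> aset q M (\<mu>(m0 := y)) m0"
  proof
    fix x assume x: "x \<in> {0..Ry}"
    show "x \<in> aset q M (\<mu>(m0 := y)) m0"
    proof (rule aset_upd_memI)
      show "0 \<le> x" "x \<le> 1" using x by (auto simp: Ry_def)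
      show "\<bar>x - y\<bar> \<le> 1 - q" using x yr rdef by (auto simp: Ry_def)
      fix i assume i: "i < M" "i \<noteq> m0"
      have "p2 \<le> \<mu> i" by (rule p2le[OF i])
      then show "\<bar>x - y\<bar> \<le> \<bar>x - \<mu> i\<bar>" using x yr by (auto simp: Ry_def)
    qed
  qed
  have A: "audience q M \<mu> m0 = measure lborel (aset q M \<mu> m0)"
    by (rule audience_single[OF m0M]) (use single cdef in auto)
  have A': "audience q M (\<mu>(m0 := y)) m0 = measure lborel (aset q M (\<mu>(m0 := y)) m0)"
    by (rule audience_upd_single[OF m0M]) (use p2le yr in force)
  have "Ry - 0 \<le> measure lborel (aset q M (\<mu>(m0 := y)) m0)" by (rule aset_ge[OF sub2])
  also have "\<dots> \<le> measure lborel (aset q M \<mu> m0)"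
    using eq_dev[OF eq m0M yr(3,4)] A A' by simp
  also have "\<dots> \<le> R - 0" by (rule aset_le[OF sub1 R0])
  finally show False using RRy by simp
qed


lemma step2: "audience q M \<mu> m0 \<le> c"
proof -
  obtain j1 where j1: "j1 < M" "j1 \<noteq> m0" "\<mu> j1 = c" using step1 by auto
  define Oth where "Oth = insert 1 {\<mu> j | j. j < M \<and> \<mu> j \<noteq> c}"
  have Othfin: "finite Oth" unfolding Oth_def by simp
  define p2 where "p2 = Min Oth"
  have p2le: "\<And>j. j < M \<Longrightarrow> \<mu> j \<noteq> c \<Longrightarrow> p2 \<le> \<mu> j"
    unfolding p2_def Oth_def by (rule Min_le) (use Othfin[unfolded Oth_def] in auto)
  have p21: "p2 \<le> 1" unfolding p2_def Oth_def by (rule Min_le) (use Othfin[unfolded Oth_def] in auto)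
  have "p2 \<in> Oth" unfolding p2_def by (rule Min_in[OF Othfin]) (simp add: Oth_def)
  then have p2c: "c < p2" using cmin c_small unfolding Oth_def by force
  define S where "S = measure lborel (aset q M \<mu> m0)"
  define A where "A = audience q M \<mu> m0"
  have key: "S \<le> c + A + e" if e: "0 < e" "e < p2 - c" for e
  proof -
    define y where "y = c + e"
    have y: "0 \<le> y" "y \<le> 1" "y < p2" "c < y" using e c_small p21 by (auto simp: y_def)
    have sub: "aset q M \<mu> m0 \<subseteq> {0..c + e/2} \<union> aset q M (\<mu>(m0:=y)) m0"
    proof
      fix x assume x: "x \<in> aset q M \<mu> m0"
      note d = aset_memD[OF x]
      show "x \<in> {0..c + e/2} \<union> aset q M (\<mu>(m0:=y)) m0"
      proof (cases "x \<le> c + e/2")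
        case True then show ?thesis using d(1) by auto
      next
        case False
        have "x \<in> aset q M (\<mu>(m0 := y)) m0"
        proof (rule aset_upd_memI)
          show "0 \<le> x" "x \<le> 1" using d by auto
          have xy: "\<bar>x - y\<bar> \<le> \<bar>x - c\<bar>" using False c_small e unfolding y_def by (auto simp: abs_if)
          show "\<bar>x - y\<bar> \<le> 1 - q" using xy d(3) cdef by simp
          fix i assume i: "i < M" "i \<noteq> m0"
          show "\<bar>x - y\<bar> \<le> \<bar>x - \<mu> i\<bar>" using xy d(4)[OF i(1)] cdef by simp
        qed
        then show ?thesis by simp
      qed
    qed
    have "S \<le> measure lborel ({0..c + e/2} \<union> aset q M (\<mu>(m0:=y)) m0)"
      unfolding S_def by (rule measure_mono_fmeasurable[OF sub aset_sets])
        (auto intro!: fmeasurable_compact compact_Un aset_compact)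
    also have "\<dots> \<le> measure lborel {0..c + e/2} + measure lborel (aset q M (\<mu>(m0:=y)) m0)"
      using aset_sets[of q M "\<mu>(m0:=y)" m0] by (intro measure_Un_le) auto
    also have "measure lborel {0..c + e/2} = c + e/2" using c_small e by simp
    also have "measure lborel (aset q M (\<mu>(m0:=y)) m0) = audience q M (\<mu>(m0:=y)) m0"
    proof (rule audience_upd_single[OF m0M, symmetric])
      fix i assume "i < M" "i \<noteq> m0"
      then show "\<mu> i \<noteq> y" using p2le[of i] y by (cases "\<mu> i = c") auto
    qed
    also have "\<dots> \<le> A" unfolding A_def by (rule eq_dev[OF eq m0M y(1,2)])
    finally show ?thesis using e by simp
  qed
  have SA: "S \<le> c + A" by (rule eps_le[of "p2 - c"]) (use p2c key in auto)
  have fin: "finite {j. j < M \<and> \<mu> j = \<mu> m0}" by (rule finite_subset[of _ "{..<M}"]) auto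
  have "{m0, j1} \<subseteq> {j. j < M \<and> \<mu> j = \<mu> m0}" using j1 m0M cdef by auto
  from card_mono[OF fin this] have card2: "2 \<le> card {j. j < M \<and> \<mu> j = \<mu> m0}"
    using j1 by simp
  define k where "k = real (card {j. j < M \<and> \<mu> j = \<mu> m0})"
  have k2: "2 \<le> k" using card2 unfolding k_def by simp
  have "A = S / k" unfolding A_def S_def k_def audience_aset by simp
  then have "S = A * k" using k2 by simp
  moreover have "0 \<le> A" unfolding A_def by (rule audience_nonneg)
  ultimately have "2 * A \<le> S" using k2 by (simp add: mult_left_mono mult.commute)
  then show ?thesis using SA unfolding A_def by simp
qed

lemma step3:
  assumes jl: "j < M" "l < M" "\<mu> j < \<mu> l" and btw: "\<And>i. i < M \<Longrightarrow> \<mu> i \<le> \<mu> j \<or> \<mu> l \<le> \<mu> i"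
  shows "\<mu> l - \<mu> j \<le> 2 * c"
proof (rule ccontr)
  assume neg: "\<not> ?thesis"
  define d where "d = \<mu> l - \<mu> j"
  define y where "y = (\<mu> j + \<mu> l) / 2"
  define w where "w = min (d/4) r"
  have d2c: "2 * c < d" using neg by (simp add: d_def)
  have w: "c/2 < w" "w \<le> d/4" "w \<le> r" using d2c cr c_small by (auto simp: w_def)
  have vj: "0 \<le> \<mu> j" and vl: "\<mu> l \<le> 1" using valid jl by auto
  have yd: "y = \<mu> j + d/2" "y = \<mu> l - d/2" by (simp_all add: y_def d_def field_simps)
  have sub: "{y - w..y + w} \<subseteq> aset q M (\<mu>(m0:=y)) m0"
  proof
    fix x assume x: "x \<in> {y - w..y + w}"
    show "x \<in> aset q M (\<mu>(m0:=y)) m0"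
    proof (rule aset_upd_memI)
      show "0 \<le> x" "x \<le> 1" using x w yd vj vl by auto
      show "\<bar>x - y\<bar> \<le> 1 - q" using x w rdef by auto
      fix i assume i: "i < M" "i \<noteq> m0"
      show "\<bar>x - y\<bar> \<le> \<bar>x - \<mu> i\<bar>" using btw[OF i(1)] x w yd by auto
    qed
  qed
  have single: "\<And>i. i < M \<Longrightarrow> i \<noteq> m0 \<Longrightarrow> \<mu> i \<noteq> y"
    using btw yd d2c c_small by fastforce
  have "(y + w) - (y - w) \<le> measure lborel (aset q M (\<mu>(m0:=y)) m0)" by (rule aset_ge[OF sub])
  also have "\<dots> = audience q M (\<mu>(m0:=y)) m0" by (rule audience_upd_single[OF m0M single, symmetric])
  also have "\<dots> \<le> audience q M \<mu> m0"
    by (rule eq_dev[OF eq m0M]) (use yd vj vl d2c c_small in auto)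
  also have "\<dots> \<le> c" by (rule step2)
  finally show False using w by simp
qed

lemma step4:
  assumes mk: "mk < M" "\<And>j. j < M \<Longrightarrow> \<mu> j \<le> \<mu> mk"
  shows "1 - \<mu> mk \<le> c"
proof (rule ccontr)
  assume neg: "\<not> ?thesis"
  define y where "y = 1 - c"
  define e where "e = y - \<mu> mk"
  define w where "w = min (e/2) r"
  have e0: "0 < e" using neg by (simp add: e_def y_def)
  have w: "0 < w" "w \<le> e/2" "w \<le> r" using e0 cr c_small by (auto simp: w_def)
  have vk: "0 \<le> \<mu> mk" using valid mk by auto
  have sub: "{y - w..1} \<subseteq> aset q M (\<mu>(m0:=y)) m0"
  proof
    fix x assume x: "x \<in> {y - w..1}"
    show "x \<in> aset q M (\<mu>(m0:=y)) m0"
    proof (rule aset_upd_memI)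
      show "0 \<le> x" "x \<le> 1" using x w vk e0 by (auto simp: e_def)
      show "\<bar>x - y\<bar> \<le> 1 - q" using x w rdef cr by (auto simp: y_def)
      fix i assume i: "i < M" "i \<noteq> m0"
      have "\<mu> i \<le> \<mu> mk" by (rule mk(2)[OF i(1)])
      then show "\<bar>x - y\<bar> \<le> \<bar>x - \<mu> i\<bar>" using x w e0 unfolding e_def by auto
    qed
  qed
  have single: "\<And>i. i < M \<Longrightarrow> i \<noteq> m0 \<Longrightarrow> \<mu> i \<noteq> y"
    using mk(2) e0 unfolding e_def by fastforce
  have "1 - (y - w) \<le> measure lborel (aset q M (\<mu>(m0:=y)) m0)" by (rule aset_ge[OF sub])
  also have "\<dots> = audience q M (\<mu>(m0:=y)) m0" by (rule audience_upd_single[OF m0M single, symmetric])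
  also have "\<dots> \<le> audience q M \<mu> m0"
    by (rule eq_dev[OF eq m0M]) (use c_small in \<open>auto simp: y_def\<close>)
  also have "\<dots> \<le> c" by (rule step2)
  finally show False using w by (simp add: y_def)
qed

lemma step5:
  assumes mk: "mk < M" "\<And>j. j < M \<Longrightarrow> \<mu> j \<le> \<mu> mk"
  shows "\<exists>j2<M. j2 \<noteq> mk \<and> \<mu> j2 = \<mu> mk"
proof (rule ccontr)
  assume "\<not> ?thesis"
  then have single: "\<And>j. j < M \<Longrightarrow> j \<noteq> mk \<Longrightarrow> \<mu> j \<noteq> \<mu> mk" by auto
  define pk where "pk = \<mu> mk"
  have c': "1 - pk \<le> c" using step4[OF mk] by (simp add: pk_def)
  have pkc: "c < pk" using c' c_small by simp
  have pk1: "pk \<le> 1" using valid mk by (auto simp: pk_def)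
  have m0mk: "m0 \<noteq> mk" using pkc cdef by (auto simp: pk_def)
  define Oth where "Oth = {\<mu> j | j. j < M \<and> j \<noteq> mk}"
  have Othfin: "finite Oth" unfolding Oth_def by simp
  have Othne: "Oth \<noteq> {}" unfolding Oth_def using m0M m0mk by auto
  define pl where "pl = Max Oth"
  have "pl \<in> Oth" unfolding pl_def using Othfin Othne by simp
  then obtain jl where jl: "jl < M" "jl \<noteq> mk" "\<mu> jl = pl" unfolding Oth_def by auto
  have plge: "\<And>j. j < M \<Longrightarrow> j \<noteq> mk \<Longrightarrow> \<mu> j \<le> pl"
    unfolding pl_def Oth_def by (rule Max_ge) (use Othfin[unfolded Oth_def] in auto)
  have plpk: "pl < pk" using mk(2)[OF jl(1)] single[OF jl(1,2)] jl by (auto simp: pk_def)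
  have pl0: "0 \<le> pl" using valid jl by auto
  define e where "e = min (r - (1 - pk)) (pk - pl) / 2"
  have e0: "0 < e" using cr c' plpk by (simp add: e_def)
  have e1: "e \<le> (r - (1 - pk))/2" "e \<le> (pk - pl)/2" by (auto simp: e_def)
  define y where "y = pk - e"
  have y: "pl < y" "y < pk" "0 \<le> y" "y \<le> 1" "1 - y \<le> r"
    using e0 e1 pl0 pk1 by (auto simp: y_def dd)
  define L where "L = max 0 (max (pk - r) ((pl + pk)/2))"
  define Ly where "Ly = max 0 (max (y - r) ((pl + y)/2))"
  have LLy: "Ly < L"
  proof -
    have "(pl + pk)/2 > 0" using pl0 plpk by simp
    moreover have "(pl + y)/2 < (pl + pk)/2" using y by simp
    moreover have "y - r < pk - r" using y by simp
    ultimately show ?thesis unfolding L_def Ly_def by (simp add: max_def)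
  qed
  have L1: "L \<le> 1" using pk1 plpk cr c_small by (auto simp: L_def dd)
  have sub1: "aset q M \<mu> mk \<subseteq> {L..1}"
  proof
    fix x assume x: "x \<in> aset q M \<mu> mk"
    note d = aset_memD[OF x]
    have "\<bar>x - pk\<bar> \<le> \<bar>x - pl\<bar>" using d(4)[OF jl(1)] jl by (simp add: pk_def)
    then have "(pl + pk)/2 \<le> x" using plpk by (auto simp: abs_if dd split: if_splits)
    then show "x \<in> {L..1}" using d(1,2,3) rdef by (auto simp: L_def pk_def)
  qed
  have sub2: "{Ly..1} \<subseteq> aset q M (\<mu>(mk := y)) mk"
  proof
    fix x assume x: "x \<in> {Ly..1}"
    have x0: "0 \<le> x" "y - r \<le> x" "(pl + y)/2 \<le> x" "x \<le> 1" using x by (auto simp: Ly_def)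
    show "x \<in> aset q M (\<mu>(mk := y)) mk"
    proof (rule aset_upd_memI)
      show "0 \<le> x" "x \<le> 1" using x0 by auto
      show "\<bar>x - y\<bar> \<le> 1 - q" using x0 y rdef by auto
      fix i assume i: "i < M" "i \<noteq> mk"
      have "\<mu> i \<le> pl" by (rule plge[OF i])
      then show "\<bar>x - y\<bar> \<le> \<bar>x - \<mu> i\<bar>" using x0 y by (auto simp: abs_if dd)
    qed
  qed
  have A: "audience q M \<mu> mk = measure lborel (aset q M \<mu> mk)"
    by (rule audience_single[OF mk(1)]) (use single in auto)
  have A': "audience q M (\<mu>(mk := y)) mk = measure lborel (aset q M (\<mu>(mk := y)) mk)"
    by (rule audience_upd_single[OF mk(1)]) (use plge y in force)
  have "1 - Ly \<le> measure lborel (aset q M (\<mu>(mk := y)) mk)" by (rule aset_ge[OF sub2])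
  also have "\<dots> \<le> measure lborel (aset q M \<mu> mk)"
    using eq_dev[OF eq mk(1) y(3,4)] A A' by simp
  also have "\<dots> \<le> 1 - L" by (rule aset_le[OF sub1 L1])
  finally show False using LLy by simp
qed

lemma final: False
proof -
  define P where "P = \<mu> ` {..<M}"
  have Pfin: "finite P" and Pne: "P \<noteq> {}" unfolding P_def using m0M by auto
  define pk where "pk = Max P"
  have "pk \<in> P" unfolding pk_def using Pfin Pne by simp
  then obtain mk where mk: "mk < M" "\<mu> mk = pk" unfolding P_def by auto
  have pkmax: "\<And>j. j < M \<Longrightarrow> \<mu> j \<le> \<mu> mk"
    unfolding mk(2) pk_def P_def by (rule Max_ge) (use Pfin[unfolded P_def] in auto)
  have c': "1 - pk \<le> c" using step4[OF mk(1) pkmax] mk by simp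
  have pkc: "c < pk" using c' c_small by simp
  obtain j1 where j1: "j1 < M" "j1 \<noteq> m0" "\<mu> j1 = c" using step1 by auto
  obtain j2 where j2: "j2 < M" "j2 \<noteq> mk" "\<mu> j2 = pk" using step5[OF mk(1) pkmax] mk by auto
  have cardP: "card P \<le> M - 2"
  proof -
    have "P \<subseteq> \<mu> ` ({..<M} - {j1, j2})"
    proof
      fix p assume "p \<in> P"
      then obtain i where i: "i < M" "p = \<mu> i" unfolding P_def by auto
      show "p \<in> \<mu> ` ({..<M} - {j1, j2})"
      proof (cases "i = j1 \<or> i = j2")
        case True
        then show ?thesis
        proof
          assume "i = j1"
          then have "p = \<mu> m0" using i j1 cdef by simp
          moreover have "m0 \<in> {..<M} - {j1, j2}" using m0M j1 j2 pkc cdef by auto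
          ultimately show ?thesis by blast
        next
          assume "i = j2"
          then have "p = \<mu> mk" using i j2 mk by simp
          moreover have "mk \<in> {..<M} - {j1, j2}" using mk j1 j2 pkc by auto
          ultimately show ?thesis by blast
        qed
      next
        case False
        then show ?thesis using i by auto
      qed
    qed
    then have "card P \<le> card (\<mu> ` ({..<M} - {j1, j2}))"
      using card_mono[of "\<mu> ` ({..<M} - {j1, j2})" P] by auto
    also have "\<dots> \<le> card ({..<M} - {j1, j2})" by (rule card_image_le) simp
    also have "\<dots> = M - 2"
    proof -
      have "j1 \<noteq> j2" using j1 j2 pkc by auto
      then show ?thesis using j1 j2 by (simp add: card_Diff_subset)
    qed
    finally show ?thesis .
  qed
  have cover: "{0..1} \<subseteq> (\<Union>p\<in>P. {p - c..p + c})"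
  proof
    fix x :: real assume x: "x \<in> {0..1}"
    have cP: "c \<in> P" "pk \<in> P" unfolding P_def using m0M cdef mk by auto
    show "x \<in> (\<Union>p\<in>P. {p - c..p + c})"
    proof (cases "x \<le> c")
      case True
      have "x \<in> {c - c..c + c}" using True x c_small by auto
      then show ?thesis using cP by blast
    next
      case xc: False
      show ?thesis
      proof (cases "pk \<le> x")
        case True
        have "x \<in> {pk - c..pk + c}" using True x c' c_small by auto
        then show ?thesis using cP by blast
      next
        case xk: False
        define Lx where "Lx = {p \<in> P. p \<le> x}"
        define Rx where "Rx = {p \<in> P. x \<le> p}"
        have Lfin: "finite Lx" "Lx \<noteq> {}" using Pfin cP xc by (auto simp: Lx_def)
        have Rfin: "finite Rx" "Rx \<noteq> {}" using Pfin cP xk by (auto simp: Rx_def)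
        define pl where "pl = Max Lx"
        define pr where "pr = Min Rx"
        have "pl \<in> Lx" unfolding pl_def using Lfin by simp
        then have pl: "pl \<in> P" "pl \<le> x" by (auto simp: Lx_def)
        have "pr \<in> Rx" unfolding pr_def using Rfin by simp
        then have pr: "pr \<in> P" "x \<le> pr" by (auto simp: Rx_def)
        have btw: "\<And>p. p \<in> P \<Longrightarrow> p \<le> pl \<or> pr \<le> p"
        proof -
          fix p assume p: "p \<in> P"
          show "p \<le> pl \<or> pr \<le> p"
          proof (cases "p \<le> x")
            case True then have "p \<in> Lx" using p by (simp add: Lx_def)
            then show ?thesis unfolding pl_def using Lfin by simp
          next
            case False then have "p \<in> Rx" using p by (simp add: Rx_def)
            then show ?thesis unfolding pr_def using Rfin by simp
          qed
        qed
        show ?thesis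
        proof (cases "pl = pr")
          case True
          have "x \<in> {pl - c..pl + c}" using True pl pr c_small by auto
          then show ?thesis using pl by blast
        next
          case False
          then have plr: "pl < pr" using pl pr by simp
          obtain jl where jl: "jl < M" "\<mu> jl = pl" using pl unfolding P_def by auto
          obtain jr where jr: "jr < M" "\<mu> jr = pr" using pr unfolding P_def by auto
          have "pr - pl \<le> 2 * c"
            using step3[of jl jr] jl jr plr btw unfolding P_def by auto
          then have "x - pl \<le> c \<or> pr - x \<le> c" by linarith
          then have "x \<in> {pl - c..pl + c} \<or> x \<in> {pr - c..pr + c}" using pl pr c_small by auto
          then show ?thesis using pl pr by blast
        qed
      qed
    qed
  qed
  have "1 \<le> measure lborel (\<Union>p\<in>P. {p - c..p + c})"
  proof -
    have "measure lborel {0..1::real} \<le> measure lborel (\<Union>p\<in>P. {p - c..p + c})"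
      by (rule measure_mono_fmeasurable[OF cover]) (auto intro!: fmeasurable_compact compact_UN Pfin)
    then show ?thesis by simp
  qed
  also have "\<dots> \<le> (\<Sum>p\<in>P. measure lborel {p - c..p + c})"
    by (rule measure_UNION_le[OF Pfin]) auto
  also have "\<dots> = (\<Sum>p\<in>P. 2 * c)" using c_small by simp
  also have "\<dots> = 2 * c * real (card P)" by simp
  also have "\<dots> \<le> 2 * c * (real M - 2)"
    using cardP M5 c_small by (intro mult_left_mono) (auto simp: of_nat_diff)
  finally have "1 \<le> 2 * c * (real M - 2)" .
  moreover have "2 * c * (real M - 2) < 1"
  proof -
    have "real M - 2 > 0" using M5 by simp
    then show ?thesis using ca by (simp add: field_simps)
  qed
  ultimately show False by simp
qed

end

lemma lower_bound:
  assumes eq: "equilibrium q M \<mu>" and q: "0 \<le> q" "q \<le> 1" and M5: "M > 5" and m: "m < M"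
  shows "min (1 - q) (1 / (2 * (real M - 2))) \<le> \<mu> m"
proof (rule ccontr)
  assume neg: "\<not> ?thesis"
  define P where "P = \<mu> ` {..<M}"
  have Pfin: "finite P" and Pne: "P \<noteq> {}" unfolding P_def using m by auto
  define c where "c = Min P"
  have "c \<in> P" unfolding c_def using Pfin Pne by simp
  then obtain m0 where m0: "m0 < M" "\<mu> m0 = c" unfolding P_def by auto
  have cmin: "\<And>j. j < M \<Longrightarrow> c \<le> \<mu> j"
    unfolding c_def P_def by (rule Min_le) (use Pfin[unfolded P_def] in auto)
  have "c \<le> \<mu> m" by (rule cmin[OF m])
  then have "c < 1 - q" "c < 1 / (2 * (real M - 2))" using neg by auto
  then interpret lb q M \<mu> m0 c "1 - q"
    by unfold_locales (use eq q M5 m0 cmin in auto)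
  show False by (rule final)
qed

lemma dev_bound2:
  fixes \<mu> :: "nat \<Rightarrow> real"
  assumes "i < M" "j1 < M" "j2 < M" "j1 \<noteq> i" "j2 \<noteq> i" "\<mu> j1 < y" "y < \<mu> j2"
  shows "measure lborel (aset q M (\<mu>(i:=y)) i) \<le> (\<mu> j2 - \<mu> j1) / 2"
proof -
  have "aset q M (\<mu>(i:=y)) i \<subseteq> {(\<mu> j1 + y)/2 .. (y + \<mu> j2)/2}"
  proof
    fix x assume x: "x \<in> aset q M (\<mu>(i:=y)) i"
    have a: "\<bar>x - y\<bar> \<le> \<bar>x - \<mu> j1\<bar>" "\<bar>x - y\<bar> \<le> \<bar>x - \<mu> j2\<bar>"
      using aset_memD(4)[OF x assms(2)] aset_memD(4)[OF x assms(3)] assms by auto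
    show "x \<in> {(\<mu> j1 + y)/2 .. (y + \<mu> j2)/2}" using a assms(6,7) by (auto simp: abs_if dd split: if_splits)
  qed
  from aset_le[OF this] show ?thesis using assms(6,7) by (simp add: dd)
qed

lemma dev_boundL:
  fixes \<mu> :: "nat \<Rightarrow> real"
  assumes "i < M" "j2 < M" "j2 \<noteq> i" "0 \<le> y" "y < \<mu> j2" "q \<le> 1"
  shows "measure lborel (aset q M (\<mu>(i:=y)) i) \<le> (y + \<mu> j2) / 2 - max 0 (y - (1 - q))"
proof -
  have "aset q M (\<mu>(i:=y)) i \<subseteq> {max 0 (y - (1 - q)) .. (y + \<mu> j2)/2}"
  proof
    fix x assume x: "x \<in> aset q M (\<mu>(i:=y)) i"
    have a: "\<bar>x - y\<bar> \<le> \<bar>x - \<mu> j2\<bar>"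
      using aset_memD(4)[OF x assms(2)] assms by auto
    have b: "0 \<le> x" "\<bar>x - y\<bar> \<le> 1 - q" using aset_memD[OF x] by auto
    show "x \<in> {max 0 (y - (1 - q)) .. (y + \<mu> j2)/2}" using a b assms(5) by (auto simp: abs_if dd split: if_splits)
  qed
  from aset_le[OF this] show ?thesis using assms(4,5,6) by (simp add: dd)
qed

lemma dev_boundR:
  fixes \<mu> :: "nat \<Rightarrow> real"
  assumes "i < M" "j1 < M" "j1 \<noteq> i" "y \<le> 1" "\<mu> j1 < y" "q \<le> 1"
  shows "measure lborel (aset q M (\<mu>(i:=y)) i) \<le> min 1 (y + (1 - q)) - (\<mu> j1 + y) / 2"
proof -
  have "aset q M (\<mu>(i:=y)) i \<subseteq> {(\<mu> j1 + y)/2 .. min 1 (y + (1 - q))}"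
  proof
    fix x assume x: "x \<in> aset q M (\<mu>(i:=y)) i"
    have a: "\<bar>x - y\<bar> \<le> \<bar>x - \<mu> j1\<bar>"
      using aset_memD(4)[OF x assms(2)] assms by auto
    have b: "x \<le> 1" "\<bar>x - y\<bar> \<le> 1 - q" using aset_memD[OF x] by auto
    show "x \<in> {(\<mu> j1 + y)/2 .. min 1 (y + (1 - q))}" using a b assms(5) by (auto simp: abs_if dd split: if_splits)
  qed
  from aset_le[OF this] show ?thesis using assms(4,5,6) by (simp add: dd)
qed

lemma dev_boundr:
  fixes \<mu> :: "nat \<Rightarrow> real"
  assumes "q \<le> 1"
  shows "measure lborel (aset q M (\<mu>(i:=y)) i) \<le> 2 * (1 - q)"
proof -
  have "aset q M (\<mu>(i:=y)) i \<subseteq> {y - (1 - q) .. y + (1 - q)}"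
    using aset_memD(3) by (fastforce simp: abs_le_iff)
  from aset_le[OF this] show ?thesis using assms by simp
qed

lemma grid_nbr:
  fixes y b s :: real and N :: nat
  assumes "s > 0" "b \<le> y" "y \<le> b + s * N" "N \<ge> 1"
  shows "\<exists>t<N. b + s * t \<le> y \<and> y \<le> b + s * (t + 1)"
proof -
  define t0 where "t0 = nat \<lfloor>(y - b) / s\<rfloor>"
  have f0: "0 \<le> (y - b) / s" using assms by simp
  have t0a: "real t0 \<le> (y - b) / s" using f0 unfolding t0_def by linarith
  have t0b: "(y - b) / s < real t0 + 1" using f0 unfolding t0_def by linarith
  have yN: "(y - b) / s \<le> N" using assms by (simp add: divide_le_eq mult.commute)
  define t where "t = min t0 (N - 1)"
  have tN: "t < N" using assms(4) by (simp add: t_def)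
  have "real t \<le> (y - b) / s" using t0a by (simp add: t_def)
  then have A: "b + s * t \<le> y" using assms(1) by (simp add: le_divide_eq mult.commute)
  have "(y - b) / s \<le> real t + 1"
  proof (cases "t0 \<le> N - 1")
    case True then show ?thesis using t0b by (simp add: t_def)
  next
    case False then have "t = N - 1" by (simp add: t_def)
    then show ?thesis using yN assms(4) by (simp add: of_nat_diff)
  qed
  then have "y - b \<le> s * (real t + 1)" using assms(1) by (simp add: divide_le_eq mult.commute)
  then have B: "y \<le> b + s * (t + 1)" by (simp add: algebra_simps)
  show ?thesis using tN A B by blast
qed

lemma dev_LR:
  fixes \<mu> :: "nat \<Rightarrow> real"
  assumes "i < M" "lo \<le> hi"
    and L: "lo = 0 \<or> (\<exists>j1<M. j1 \<noteq> i \<and> \<mu> j1 < y \<and> lo = (\<mu> j1 + y)/2)"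
    and R: "hi = 1 \<or> (\<exists>j2<M. j2 \<noteq> i \<and> y < \<mu> j2 \<and> hi = (y + \<mu> j2)/2)"
  shows "measure lborel (aset q M (\<mu>(i:=y)) i) \<le> hi - lo"
proof -
  have "aset q M (\<mu>(i:=y)) i \<subseteq> {lo..hi}"
  proof
    fix x assume x: "x \<in> aset q M (\<mu>(i:=y)) i"
    note d = aset_memD[OF x]
    have "lo \<le> x"
      using L
    proof
      assume "lo = 0" then show ?thesis using d by simp
    next
      assume "\<exists>j1<M. j1 \<noteq> i \<and> \<mu> j1 < y \<and> lo = (\<mu> j1 + y)/2"
      then obtain j1 where j1: "j1 < M" "j1 \<noteq> i" "\<mu> j1 < y" "lo = (\<mu> j1 + y)/2" by blast
      have "\<bar>x - y\<bar> \<le> \<bar>x - \<mu> j1\<bar>" using d(4)[OF j1(1)] j1 assms(1) by simp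
      then show ?thesis using j1 by (auto simp: abs_if dd split: if_splits)
    qed
    moreover have "x \<le> hi"
      using R
    proof
      assume "hi = 1" then show ?thesis using d by simp
    next
      assume "\<exists>j2<M. j2 \<noteq> i \<and> y < \<mu> j2 \<and> hi = (y + \<mu> j2)/2"
      then obtain j2 where j2: "j2 < M" "j2 \<noteq> i" "y < \<mu> j2" "hi = (y + \<mu> j2)/2" by blast
      have "\<bar>x - y\<bar> \<le> \<bar>x - \<mu> j2\<bar>" using d(4)[OF j2(1)] j2 assms(1) by simp
      then show ?thesis using j2 by (auto simp: abs_if dd split: if_splits)
    qed
    ultimately show "x \<in> {lo..hi}" by simp
  qed
  from aset_le[OF this assms(2)] show ?thesis .
qed

lemma tie_half:
  fixes \<mu> :: "nat \<Rightarrow> real"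
  assumes "i < M" "j < M" "j \<noteq> i" "\<mu> j = y"
  shows "audience q M (\<mu>(i:=y)) i \<le> measure lborel (aset q M (\<mu>(i:=y)) i) / 2"
proof -
  have fin: "finite {l. l < M \<and> (\<mu>(i:=y)) l = (\<mu>(i:=y)) i}" by (rule finite_subset[of _ "{..<M}"]) auto
  have "{i, j} \<subseteq> {l. l < M \<and> (\<mu>(i:=y)) l = (\<mu>(i:=y)) i}" using assms by auto
  from card_mono[OF fin this] have "2 \<le> card {l. l < M \<and> (\<mu>(i:=y)) l = (\<mu>(i:=y)) i}"
    using assms by simp
  then have k: "2 \<le> real (card {l. l < M \<and> (\<mu>(i:=y)) l = (\<mu>(i:=y)) i})" by simp
  have m: "0 \<le> measure lborel (aset q M (\<mu>(i:=y)) i)" by simp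
  show ?thesis unfolding audience_aset using k m by (intro divide_left_mono) auto
qed

definition gapD :: "nat \<Rightarrow> (nat \<Rightarrow> real) \<Rightarrow> nat \<Rightarrow> real \<Rightarrow> bool" where
  "gapD M \<mu> i D \<longleftrightarrow> (\<forall>j1<M. \<forall>j2<M. j1 \<noteq> i \<longrightarrow> j2 \<noteq> i \<longrightarrow> \<mu> j1 < \<mu> j2 \<longrightarrow>
      (\<forall>l<M. l \<noteq> i \<longrightarrow> \<mu> l \<le> \<mu> j1 \<or> \<mu> j2 \<le> \<mu> l) \<longrightarrow> \<mu> j2 - \<mu> j1 \<le> D)"

lemma left_nbr:
  fixes \<mu> :: "nat \<Rightarrow> real"
  assumes "\<exists>j1<M. j1 \<noteq> i \<and> \<mu> j1 < y"
  shows "\<exists>j1<M. j1 \<noteq> i \<and> \<mu> j1 < y \<and> (\<forall>l<M. l \<noteq> i \<longrightarrow> \<mu> l < y \<longrightarrow> \<mu> l \<le> \<mu> j1)"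
proof -
  define S where "S = {\<mu> l | l. l < M \<and> l \<noteq> i \<and> \<mu> l < y}"
  have fin: "finite S" unfolding S_def by (rule finite_subset[of _ "\<mu> ` {..<M}"]) auto
  have ne: "S \<noteq> {}" using assms unfolding S_def by auto
  have "Max S \<in> S" using fin ne by simp
  then obtain j1 where j1: "j1 < M" "j1 \<noteq> i" "\<mu> j1 < y" "\<mu> j1 = Max S" unfolding S_def by auto
  have "\<forall>l<M. l \<noteq> i \<longrightarrow> \<mu> l < y \<longrightarrow> \<mu> l \<le> \<mu> j1"
    unfolding j1(4) using fin by (auto simp: S_def intro!: Max_ge)
  then show ?thesis using j1 by blast
qed

lemma right_nbr:
  fixes \<mu> :: "nat \<Rightarrow> real"
  assumes "\<exists>j2<M. j2 \<noteq> i \<and> y < \<mu> j2"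
  shows "\<exists>j2<M. j2 \<noteq> i \<and> y < \<mu> j2 \<and> (\<forall>l<M. l \<noteq> i \<longrightarrow> y < \<mu> l \<longrightarrow> \<mu> j2 \<le> \<mu> l)"
proof -
  define S where "S = {\<mu> l | l. l < M \<and> l \<noteq> i \<and> y < \<mu> l}"
  have fin: "finite S" unfolding S_def by (rule finite_subset[of _ "\<mu> ` {..<M}"]) auto
  have ne: "S \<noteq> {}" using assms unfolding S_def by auto
  have "Min S \<in> S" using fin ne by simp
  then obtain j2 where j2: "j2 < M" "j2 \<noteq> i" "y < \<mu> j2" "\<mu> j2 = Min S" unfolding S_def by auto
  have "\<forall>l<M. l \<noteq> i \<longrightarrow> y < \<mu> l \<longrightarrow> \<mu> j2 \<le> \<mu> l"
    unfolding j2(4) using fin by (auto simp: S_def intro!: Min_le)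
  then show ?thesis using j2 by blast
qed

lemma G1:
  fixes \<mu> :: "nat \<Rightarrow> real"
  assumes i: "i < M" and gap: "gapD M \<mu> i D"
    and L: "\<exists>j1<M. j1 \<noteq> i \<and> \<mu> j1 < y" and R: "\<exists>j2<M. j2 \<noteq> i \<and> y < \<mu> j2"
    and ny: "\<And>l. l < M \<Longrightarrow> l \<noteq> i \<Longrightarrow> \<mu> l \<noteq> y"
  shows "audience q M (\<mu>(i:=y)) i \<le> D / 2"
proof -
  obtain j1 where j1: "j1 < M" "j1 \<noteq> i" "\<mu> j1 < y" "\<forall>l<M. l \<noteq> i \<longrightarrow> \<mu> l < y \<longrightarrow> \<mu> l \<le> \<mu> j1"
    using left_nbr[OF L] by blast
  obtain j2 where j2: "j2 < M" "j2 \<noteq> i" "y < \<mu> j2" "\<forall>l<M. l \<noteq> i \<longrightarrow> y < \<mu> l \<longrightarrow> \<mu> j2 \<le> \<mu> l"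
    using right_nbr[OF R] by blast
  have btw: "\<forall>l<M. l \<noteq> i \<longrightarrow> \<mu> l \<le> \<mu> j1 \<or> \<mu> j2 \<le> \<mu> l"
  proof (intro allI impI)
    fix l assume l: "l < M" "l \<noteq> i"
    then have "\<mu> l \<noteq> y" by (rule ny)
    then show "\<mu> l \<le> \<mu> j1 \<or> \<mu> j2 \<le> \<mu> l" using j1(4) j2(4) l by force
  qed
  have "\<mu> j2 - \<mu> j1 \<le> D" using gap j1 j2 btw unfolding gapD_def by auto
  moreover have "measure lborel (aset q M (\<mu>(i:=y)) i) \<le> (\<mu> j2 - \<mu> j1) / 2"
    by (rule dev_bound2) (use i j1 j2 in auto)
  moreover have "audience q M (\<mu>(i:=y)) i \<le> measure lborel (aset q M (\<mu>(i:=y)) i)"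
    by (rule audience_le_meas[OF i])
  ultimately show ?thesis by (simp add: dd)
qed

lemma G2:
  fixes \<mu> :: "nat \<Rightarrow> real"
  assumes i: "i < M" and gap: "gapD M \<mu> i D"
    and j: "j < M" "j \<noteq> i" "\<mu> j = y" and y01: "0 \<le> y" "y \<le> 1"
    and L: "(\<exists>j1<M. j1 \<noteq> i \<and> \<mu> j1 < y) \<or> y \<le> D / 2"
    and R: "(\<exists>j2<M. j2 \<noteq> i \<and> y < \<mu> j2) \<or> 1 - y \<le> D / 2"
  shows "audience q M (\<mu>(i:=y)) i \<le> D / 2"
proof -
  obtain lo where lo: "lo = 0 \<or> (\<exists>j1<M. j1 \<noteq> i \<and> \<mu> j1 < y \<and> lo = (\<mu> j1 + y)/2)" "y - lo \<le> D/2" "lo \<le> y"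
  proof (cases "\<exists>j1<M. j1 \<noteq> i \<and> \<mu> j1 < y")
    case True
    obtain j1 where j1: "j1 < M" "j1 \<noteq> i" "\<mu> j1 < y" "\<forall>l<M. l \<noteq> i \<longrightarrow> \<mu> l < y \<longrightarrow> \<mu> l \<le> \<mu> j1"
      using left_nbr[OF True] by blast
    have "\<forall>l<M. l \<noteq> i \<longrightarrow> \<mu> l \<le> \<mu> j1 \<or> \<mu> j \<le> \<mu> l" using j1(4) j(3) by force
    then have "\<mu> j - \<mu> j1 \<le> D" using gap j1 j unfolding gapD_def by auto
    then show ?thesis using that[of "(\<mu> j1 + y)/2"] j1 j by (auto simp: dd)
  next
    case False
    then have "y \<le> D/2" using L by blast
    then show ?thesis using that[of 0] y01 by auto
  qed
  obtain hi where hi: "hi = 1 \<or> (\<exists>j2<M. j2 \<noteq> i \<and> y < \<mu> j2 \<and> hi = (y + \<mu> j2)/2)" "hi - y \<le> D/2" "y \<le> hi"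
  proof (cases "\<exists>j2<M. j2 \<noteq> i \<and> y < \<mu> j2")
    case True
    obtain j2 where j2: "j2 < M" "j2 \<noteq> i" "y < \<mu> j2" "\<forall>l<M. l \<noteq> i \<longrightarrow> y < \<mu> l \<longrightarrow> \<mu> j2 \<le> \<mu> l"
      using right_nbr[OF True] by blast
    have "\<forall>l<M. l \<noteq> i \<longrightarrow> \<mu> l \<le> \<mu> j \<or> \<mu> j2 \<le> \<mu> l" using j2(4) j(3) by force
    then have "\<mu> j2 - \<mu> j \<le> D" using gap j2 j unfolding gapD_def by auto
    then show ?thesis using that[of "(y + \<mu> j2)/2"] j2 j by (auto simp: dd)
  next
    case False
    then have "1 - y \<le> D/2" using R by blast
    then show ?thesis using that[of 1] y01 by auto
  qed
  have "measure lborel (aset q M (\<mu>(i:=y)) i) \<le> hi - lo"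
    by (rule dev_LR[OF i _ lo(1) hi(1)]) (use lo hi in auto)
  moreover have "audience q M (\<mu>(i:=y)) i \<le> measure lborel (aset q M (\<mu>(i:=y)) i) / 2"
    by (rule tie_half[of i M j \<mu> y]) (use i j in auto)
  ultimately show ?thesis using lo hi by (simp add: dd)
qed

locale grid =
  fixes q :: real and M :: nat and r s :: real
  assumes M5: "M > 5" and q0: "0 \<le> q" and q1: "q \<le> 1" and rdef: "r = 1 - q"
    and ra: "r < 1 / (2 * (real M - 2))" and sdef: "s = (1 - 2 * r) / (real M - 1)"
begin

definition g :: "nat \<Rightarrow> real" where "g j = r + s * real j"

lemma r0: "0 \<le> r" using q1 rdef by simp

lemma rM: "r * (real M + 1) < 1"
proof -
  have M6: "real M \<ge> 6" using M5 by simp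
  have "r * (2 * (real M - 2)) < 1" using ra M6 by (simp add: field_simps)
  moreover have "r * (real M + 1) \<le> r * (2 * (real M - 2))" using r0 M6 by (intro mult_left_mono) auto
  ultimately show ?thesis by linarith
qed

lemma s_eq: "s * (real M - 1) = 1 - 2 * r"
  using M5 by (simp add: sdef)

lemma rs: "r < s"
proof -
  have M6: "real M - 1 > 0" using M5 by simp
  have "r * (real M - 1) < s * (real M - 1)" using s_eq rM by (simp add: algebra_simps)
  then show ?thesis using M6 by simp
qed

lemma s0: "0 < s" using rs r0 by simp

lemma g_top: "g (M - 1) = 1 - r"
proof -
  have "real (M - 1) = real M - 1" using M5 by (simp add: of_nat_diff)
  then show ?thesis unfolding g_def using s_eq by simp
qed

lemma g_mono: "j < l \<Longrightarrow> g j + s \<le> g l"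
proof -
  assume "j < l"
  then have "real j + 1 \<le> real l" by simp
  then have "s * (real j + 1) \<le> s * real l" using s0 by (intro mult_left_mono) auto
  then show ?thesis unfolding g_def by (simp add: algebra_simps)
qed

lemma g_strict: "j < l \<Longrightarrow> g j < g l" using g_mono s0 by force

lemma g_inj: "g j = g l \<Longrightarrow> j = l"
  using g_strict by (metis less_irrefl nat_neq_iff)

lemma g_dist: "j \<noteq> l \<Longrightarrow> s \<le> \<bar>g j - g l\<bar>"
  using g_mono[of j l] g_mono[of l j] by (cases "j < l") auto

lemma g_range: "j < M \<Longrightarrow> r \<le> g j \<and> g j \<le> 1 - r"
proof -
  assume j: "j < M"
  have "r \<le> g j" unfolding g_def using s0 by simp
  moreover have "g j \<le> g (M - 1)"
  proof (cases "j = M - 1")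
    case False
    then have "j < M - 1" using j by simp
    then show ?thesis using g_strict[of j "M - 1"] by simp
  qed simp
  ultimately show ?thesis using g_top by simp
qed

lemma g_valid: "valid_profile M g"
  unfolding valid_profile_def using g_range r0 by force

definition w where "w = min r (s/2)"

lemma w_le: "w \<le> r" "w \<le> s/2" "0 \<le> w" using r0 s0 by (auto simp: w_def)

lemma rw1: "r + w \<le> 1 - r"
proof -
  have "s \<le> s * (real M - 1)" using s0 M5 by simp
  then show ?thesis using w_le s_eq s0 by linarith
qed

lemma single_g: "i < M \<Longrightarrow> audience q M g i = measure lborel (aset q M g i)"
  by (rule audience_single) (use g_inj in auto)

lemma own_int:
  assumes i: "0 < i" "i < M - 1"
  shows "2 * w \<le> audience q M g i"
proof -
  have gi: "r + s \<le> g i" "g i + s \<le> 1 - r"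
    using g_mono[of 0 i] g_mono[of i "M - 1"] g_top i by (auto simp: g_def)
  have "{g i - w .. g i + w} \<subseteq> aset q M g i"
  proof
    fix x assume x: "x \<in> {g i - w .. g i + w}"
    have xw: "\<bar>x - g i\<bar> \<le> w" using x by auto
    show "x \<in> aset q M g i" unfolding aset_def
    proof (intro CollectI conjI allI impI)
      show "x \<in> {0..1}" using x gi r0 s0 w_le by auto
      have "w \<le> r" by (simp add: w_def)
      then show "\<bar>x - g i\<bar> \<le> 1 - q" using xw rdef by linarith
      fix j assume "j < M"
      show "\<bar>x - g i\<bar> \<le> \<bar>x - g j\<bar>"
      proof (cases "j = i")
        case False
        have "s \<le> \<bar>g i - g j\<bar>" using g_dist False by simp
        moreover have "\<bar>g i - g j\<bar> \<le> \<bar>x - g i\<bar> + \<bar>x - g j\<bar>" by (auto simp: abs_if)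
        ultimately show ?thesis using xw w_le by linarith
      qed simp
    qed
  qed
  from aset_ge[OF this] show ?thesis using single_g i by simp
qed

lemma own_0: "r + w \<le> audience q M g 0"
proof -
  have g0: "g 0 = r" by (simp add: g_def)
  have "{0 .. r + w} \<subseteq> aset q M g 0"
  proof
    fix x assume x: "x \<in> {0 .. r + w}"
    show "x \<in> aset q M g 0" unfolding aset_def
    proof (intro CollectI conjI allI impI)
      show "x \<in> {0..1}" using x rw1 r0 by auto
      show "\<bar>x - g 0\<bar> \<le> 1 - q" using x rdef g0 r0 w_le by (auto simp: abs_le_iff)
      fix j assume "j < M"
      show "\<bar>x - g 0\<bar> \<le> \<bar>x - g j\<bar>"
      proof (cases "j = 0")
        case False
        have "r + s \<le> g j" using g_mono[of 0 j] False g0 by simp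
        then show ?thesis using x g0 w_le by (auto simp: abs_if)
      qed simp
    qed
  qed
  from aset_ge[OF this] show ?thesis using single_g M5 by simp
qed

lemma own_top: "r + w \<le> audience q M g (M - 1)"
proof -
  have "{1 - r - w .. 1} \<subseteq> aset q M g (M - 1)"
  proof
    fix x assume x: "x \<in> {1 - r - w .. 1}"
    show "x \<in> aset q M g (M - 1)" unfolding aset_def
    proof (intro CollectI conjI allI impI)
      show "x \<in> {0..1}" using x rw1 r0 by auto
      show "\<bar>x - g (M - 1)\<bar> \<le> 1 - q" using x rdef g_top r0 w_le by (auto simp: abs_le_iff)
      fix j assume j: "j < M"
      show "\<bar>x - g (M - 1)\<bar> \<le> \<bar>x - g j\<bar>"
      proof (cases "j = M - 1")
        case False
        then have "j < M - 1" using j by simp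
        then have "g j + s \<le> 1 - r" using g_mono[of j "M - 1"] g_top by simp
        then show ?thesis using x g_top w_le by (auto simp: abs_if)
      qed simp
    qed
  qed
  from aset_ge[OF this] show ?thesis using single_g M5 by simp
qed

lemma g_diff: "g l - g j = s * (real l - real j)"
  unfolding g_def by (simp add: algebra_simps)

lemma gap_g: "gapD M g i (2 * s)"
  unfolding gapD_def
proof (intro allI impI)
  fix j1 j2 assume j: "j1 < M" "j2 < M" "j1 \<noteq> i" "j2 \<noteq> i" "g j1 < g j2"
    and btw: "\<forall>l<M. l \<noteq> i \<longrightarrow> g l \<le> g j1 \<or> g j2 \<le> g l"
  show "g j2 - g j1 \<le> 2 * s"
  proof (rule ccontr)
    assume neg: "\<not> ?thesis"
    have "j1 < j2" using j(5) g_strict by (metis less_asym nat_neq_iff)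
    have "\<not> j2 \<le> j1 + 2"
    proof
      assume "j2 \<le> j1 + 2"
      then have "real j2 - real j1 \<le> 2" by simp
      then have "s * (real j2 - real j1) \<le> s * 2" using s0 by (intro mult_left_mono) auto
      then show False using neg g_diff[of j2 j1] by simp
    qed
    then have j3: "j1 + 2 < j2" by simp
    define l where "l = (if j1 + 1 = i then j1 + 2 else j1 + 1)"
    have l: "l < M" "l \<noteq> i" "j1 < l" "l < j2" using j3 j by (auto simp: l_def)
    have "g j1 < g l" "g l < g j2" using g_strict l by auto
    then show False using btw l by force
  qed
qed

lemma r_le_s: "r \<le> s" using rs by simp

lemma dev_g:
  assumes i: "i < M" and y: "0 \<le> y" "y \<le> 1"
  shows "audience q M (g(i:=y)) i \<le> (if i = 0 \<or> i = M - 1 then r + w else 2 * w)"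
proof -
  define V where "V = (if i = 0 \<or> i = M - 1 then r + w else 2 * w)"
  have aud: "audience q M (g(i:=y)) i \<le> measure lborel (aset q M (g(i:=y)) i)"
    by (rule audience_le_meas[OF i])
  have mr: "measure lborel (aset q M (g(i:=y)) i) \<le> 2 * r"
    using dev_boundr[OF q1, of M g i y] rdef by simp
  have qr: "1 - q = r" using rdef by simp
  have "audience q M (g(i:=y)) i \<le> V"
  proof (cases "w = r")
    case True
    then show ?thesis using aud mr by (simp add: V_def)
  next
    case False
    then have ws: "w = s/2" "s/2 < r" by (auto simp: w_def min_def split: if_splits)
    have rV: "r \<le> V" using ws rs r0 by (simp add: V_def)
    have sV: "s \<le> V" using ws rs r0 by (simp add: V_def)
    show ?thesis
    proof (cases "\<exists>j<M. j \<noteq> i \<and> g j = y")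
      case True
      then obtain j where j: "j < M" "j \<noteq> i" "g j = y" by blast
      have "audience q M (g(i:=y)) i \<le> measure lborel (aset q M (g(i:=y)) i) / 2"
        by (rule tie_half[of i M j g y]) (use i j in auto)
      then show ?thesis using mr rV by linarith
    next
      case False
      then have ny: "\<And>l. l < M \<Longrightarrow> l \<noteq> i \<Longrightarrow> g l \<noteq> y" by blast
      show ?thesis
      proof (cases "\<exists>j1<M. j1 \<noteq> i \<and> g j1 < y")
        case L: False
        show ?thesis
        proof (cases "i = 0")
          case False
          have "y < g 0" using L ny[of 0] False M5 by force
          then have y0: "y < r" by (simp add: g_def)
          have "measure lborel (aset q M (g(i:=y)) i) \<le> (y + g 0) / 2 - max 0 (y - (1 - q))"
            by (rule dev_boundL) (use i False M5 y \<open>y < g 0\<close> q1 in auto)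
          moreover have "0 \<le> max 0 (y - (1 - q))" by simp
          ultimately show ?thesis using aud y0 rV by (simp add: g_def dd)
        next
          case True
          have M1: "1 < M" "(1::nat) \<noteq> i" using M5 True by auto
          have "\<not> g 1 < y" using L M1 by blast
          moreover have "g 1 \<noteq> y" using ny[of 1] True M5 by auto
          ultimately have "y < g 1" by linarith
          then have y0: "y < r + s" by (simp add: g_def)
          have "measure lborel (aset q M (g(i:=y)) i) \<le> (y + g 1) / 2 - max 0 (y - (1 - q))"
            by (rule dev_boundL) (use i True M5 y \<open>y < g 1\<close> q1 in auto)
          moreover have "0 \<le> max 0 (y - (1 - q))" "y - r \<le> max 0 (y - (1 - q))" using qr by auto
          moreover have "V = r + s/2" using True ws by (simp add: V_def)
          ultimately show ?thesis using aud y0 by (simp add: g_def dd)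
        qed
      next
        case L: True
        show ?thesis
        proof (cases "\<exists>j2<M. j2 \<noteq> i \<and> y < g j2")
          case R: False
          show ?thesis
          proof (cases "i = M - 1")
            case False
            have M1: "M - 1 < M" "M - 1 \<noteq> i" using M5 False by auto
            have "\<not> y < g (M - 1)" using R M1 by blast
            moreover have "g (M - 1) \<noteq> y" using ny M1 by blast
            ultimately have "g (M - 1) < y" by linarith
            then have y0: "1 - r < y" using g_top by simp
            have "measure lborel (aset q M (g(i:=y)) i) \<le> min 1 (y + (1 - q)) - (g (M - 1) + y) / 2"
              by (rule dev_boundR) (use i False M5 y \<open>g (M - 1) < y\<close> q1 in auto)
            moreover have "min 1 (y + (1 - q)) \<le> 1" by simp
            ultimately show ?thesis using aud y0 rV g_top by (simp add: dd)
          next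
            case True
            have M1: "M - 2 < M" "M - 2 \<noteq> i" using M5 True by auto
            have "\<not> y < g (M - 2)" using R M1 by blast
            moreover have "g (M - 2) \<noteq> y" using ny M1 by blast
            ultimately have "g (M - 2) < y" by linarith
            have gM2: "g (M - 2) = 1 - r - s"
            proof -
              have "g (M - 2) + s = g (M - 1)"
                unfolding g_def using M5 by (simp add: of_nat_diff algebra_simps)
              then show ?thesis using g_top by simp
            qed
            have "measure lborel (aset q M (g(i:=y)) i) \<le> min 1 (y + (1 - q)) - (g (M - 2) + y) / 2"
              by (rule dev_boundR) (use i True M5 y \<open>g (M - 2) < y\<close> q1 in auto)
            moreover have "min 1 (y + (1 - q)) \<le> 1" "min 1 (y + (1 - q)) \<le> y + r" using qr by auto
            moreover have "V = r + s/2" using True ws by (simp add: V_def)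
            ultimately show ?thesis using aud gM2 by (simp add: dd)
          qed
        next
          case R: True
          have "audience q M (g(i:=y)) i \<le> 2 * s / 2"
            by (rule G1[OF i gap_g L R ny])
          then show ?thesis using sV by simp
        qed
      qed
    qed
  qed
  then show ?thesis by (simp add: V_def)
qed

lemma g_eq: "equilibrium q M g"
  unfolding equilibrium_def
proof (intro conjI allI impI ballI)
  show "valid_profile M g" by (rule g_valid)
  fix i y assume i: "i < M" and y: "y \<in> {0..1::real}"
  have d: "audience q M (g(i:=y)) i \<le> (if i = 0 \<or> i = M - 1 then r + w else 2 * w)"
    using dev_g[OF i] y by auto
  show "audience q M (g(i:=y)) i \<le> audience q M g i"
  proof (cases "i = 0")
    case True then show ?thesis using d own_0 by simp
  next
    case False
    show ?thesis
    proof (cases "i = M - 1")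
      case True then show ?thesis using d own_top by simp
    next
      case False
      then have "0 < i" "i < M - 1" using \<open>i \<noteq> 0\<close> i by auto
      moreover have "2 * w \<le> audience q M g i" by (rule own_int) fact+
      ultimately show ?thesis using d \<open>i \<noteq> 0\<close> False by auto
    qed
  qed
qed

lemma g_in_Psi: "g \<in> Psi q M" and g_0: "g 0 = r"
  using g_eq by (auto simp: Psi_def g_def)

end

lemma dev_generic:
  fixes \<mu> :: "nat \<Rightarrow> real"
  assumes i: "i < M" and y: "0 \<le> y" "y \<le> 1" and q1: "q \<le> 1" and gap: "gapD M \<mu> i D"
    and j0: "j0 < M" "j0 \<noteq> i" "\<mu> j0 = b" and jN: "jN < M" "jN \<noteq> i" "\<mu> jN = 1 - b"
    and b: "0 \<le> b" "b \<le> D/2"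
    and rng: "\<And>l. l < M \<Longrightarrow> l \<noteq> i \<Longrightarrow> b \<le> \<mu> l \<and> \<mu> l \<le> 1 - b"
  shows "audience q M (\<mu>(i:=y)) i \<le> D/2"
proof -
  have aud: "audience q M (\<mu>(i:=y)) i \<le> measure lborel (aset q M (\<mu>(i:=y)) i)"
    by (rule audience_le_meas[OF i])
  show ?thesis
  proof (cases "\<exists>j<M. j \<noteq> i \<and> \<mu> j = y")
    case True
    then obtain j where j: "j < M" "j \<noteq> i" "\<mu> j = y" by blast
    have yb: "b \<le> y" "y \<le> 1 - b" using rng[OF j(1,2)] j by auto
    show ?thesis
    proof (rule G2[OF i gap j y])
      show "(\<exists>j1<M. j1 \<noteq> i \<and> \<mu> j1 < y) \<or> y \<le> D / 2"
      proof (cases "b < y")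
        case True
        then have "\<mu> j0 < y" using j0 by simp
        then show ?thesis using j0 by blast
      next
        case False then show ?thesis using yb b by simp
      qed
      show "(\<exists>j2<M. j2 \<noteq> i \<and> y < \<mu> j2) \<or> 1 - y \<le> D / 2"
      proof (cases "y < 1 - b")
        case True
        then have "y < \<mu> jN" using jN by simp
        then show ?thesis using jN by blast
      next
        case False then show ?thesis using yb b by simp
      qed
    qed
  next
    case False
    then have ny: "\<And>l. l < M \<Longrightarrow> l \<noteq> i \<Longrightarrow> \<mu> l \<noteq> y" by blast
    show ?thesis
    proof (cases "\<exists>j1<M. j1 \<noteq> i \<and> \<mu> j1 < y")
      case L: False
      have "\<not> \<mu> j0 < y" using L j0 by blast
      moreover have "\<mu> j0 \<noteq> y" using ny j0 by blast
      ultimately have yb: "y < b" using j0 by simp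
      have "measure lborel (aset q M (\<mu>(i:=y)) i) \<le> (y + \<mu> j0) / 2 - max 0 (y - (1 - q))"
        by (rule dev_boundL) (use i j0 y yb q1 in auto)
      moreover have "0 \<le> max 0 (y - (1 - q))" by simp
      ultimately show ?thesis using aud yb b j0 by (simp add: dd)
    next
      case L: True
      show ?thesis
      proof (cases "\<exists>j2<M. j2 \<noteq> i \<and> y < \<mu> j2")
        case R: False
        have "\<not> y < \<mu> jN" using R jN by blast
        moreover have "\<mu> jN \<noteq> y" using ny jN by blast
        ultimately have yb: "1 - b < y" using jN by simp
        have "measure lborel (aset q M (\<mu>(i:=y)) i) \<le> min 1 (y + (1 - q)) - (\<mu> jN + y) / 2"
          by (rule dev_boundR) (use i jN y yb q1 in auto)
        moreover have "min 1 (y + (1 - q)) \<le> 1" by simp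
        ultimately show ?thesis using aud yb b jN by (simp add: dd)
      next
        case R: True
        show ?thesis by (rule G1[OF i gap L R ny])
      qed
    qed
  qed
qed

locale hot =
  fixes q :: real and M :: nat and r a :: real
  assumes M5: "M > 5" and q0: "0 \<le> q" and q1: "q \<le> 1" and rdef: "r = 1 - q"
    and adef: "a = 1 / (2 * (real M - 2))" and ar: "a \<le> r"
begin

definition G :: "nat \<Rightarrow> real" where "G t = a + 2 * a * real t"
definition h :: "nat \<Rightarrow> nat" where "h j = min (j - 1) (M - 3)"
definition mu :: "nat \<Rightarrow> real" where "mu j = G (h j)"

lemma a0: "0 < a" using M5 by (simp add: adef)

lemma aM: "2 * a * (real M - 2) = 1" using M5 by (simp add: adef)

lemma G_N: "G (M - 3) = 1 - a"
proof -
  have "real (M - 3) = real M - 3" using M5 by (simp add: of_nat_diff)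
  then have "G (M - 3) = a + 2 * a * (real M - 2) - 2 * a" unfolding G_def by (simp add: algebra_simps)
  then show ?thesis using aM by simp
qed

lemma G_diff: "G t2 - G t1 = 2 * a * (real t2 - real t1)"
  unfolding G_def by (simp add: algebra_simps)

lemma G_strict: "t1 < t2 \<Longrightarrow> G t1 < G t2"
proof -
  assume "t1 < t2"
  then have "0 < real t2 - real t1" by simp
  then have "0 < 2 * a * (real t2 - real t1)" using a0 by simp
  then show ?thesis using G_diff[of t2 t1] by linarith
qed

lemma G_inj: "G t1 = G t2 \<longleftrightarrow> t1 = t2"
  using G_strict[of t1 t2] G_strict[of t2 t1] by (cases "t1 < t2"; cases "t2 < t1") auto

lemma h_le: "h j \<le> M - 3" by (simp add: h_def)

lemma h_succ: "t \<le> M - 3 \<Longrightarrow> h (t + 1) = t" by (simp add: h_def)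

lemma G_range: "t \<le> M - 3 \<Longrightarrow> a \<le> G t \<and> G t \<le> 1 - a"
proof -
  assume t: "t \<le> M - 3"
  have "a \<le> G t" unfolding G_def using a0 by simp
  moreover have "G t \<le> G (M - 3)" using G_strict[of t "M - 3"] t by (cases "t = M - 3") auto
  ultimately show ?thesis using G_N by simp
qed

lemma mu_range: "a \<le> mu j \<and> mu j \<le> 1 - a"
  unfolding mu_def using G_range h_le by blast

lemma mu_eq: "mu j = mu l \<longleftrightarrow> h j = h l"
  unfolding mu_def by (rule G_inj)

lemma mu_valid: "valid_profile M mu"
  unfolding valid_profile_def
proof (intro allI impI)
  fix j :: nat
  have "a \<le> mu j \<and> mu j \<le> 1 - a" by (rule mu_range)
  then show "0 \<le> mu j \<and> mu j \<le> 1" using a0 by linarith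
qed

lemma own_set: "{mu i - a .. mu i + a} \<subseteq> aset q M mu i"
proof
  fix x assume x: "x \<in> {mu i - a .. mu i + a}"
  have xa: "\<bar>x - mu i\<bar> \<le> a" using x by auto
  show "x \<in> aset q M mu i" unfolding aset_def
  proof (intro CollectI conjI allI impI)
    show "x \<in> {0..1}" using x mu_range[of i] by auto
    show "\<bar>x - mu i\<bar> \<le> 1 - q" using xa ar rdef by linarith
    fix j assume "j < M"
    show "\<bar>x - mu i\<bar> \<le> \<bar>x - mu j\<bar>"
    proof (cases "h j = h i")
      case True then show ?thesis by (simp add: mu_def)
    next
      case False
      have "1 \<le> \<bar>real (h j) - real (h i)\<bar>" using False by linarith
      then have "2 * a * 1 \<le> 2 * a * \<bar>real (h j) - real (h i)\<bar>" using a0 by (intro mult_left_mono) auto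
      then have "2 * a \<le> \<bar>mu j - mu i\<bar>" unfolding mu_def G_diff by (simp add: abs_mult a0 less_imp_le)
      moreover have "\<bar>mu j - mu i\<bar> \<le> \<bar>x - mu i\<bar> + \<bar>x - mu j\<bar>" by (auto simp: abs_if)
      ultimately show ?thesis using xa by linarith
    qed
  qed
qed

lemma own_meas: "2 * a \<le> measure lborel (aset q M mu i)"
  using aset_ge[OF own_set] by simp

definition P :: "nat \<Rightarrow> bool" where "P i \<longleftrightarrow> h i = 0 \<or> h i = M - 3"

definition V :: "nat \<Rightarrow> real" where "V i = (if P i then a else 2 * a)"

lemma fiber_pair: "P i \<Longrightarrow> card {j. j < M \<and> mu j = mu i} \<le> 2"
proof -
  assume Pi: "P i"
  have M3: "0 < M - 3" using M5 by simp
  have sub: "{j. j < M \<and> mu j = mu i} \<subseteq> {0, 1} \<or> {j. j < M \<and> mu j = mu i} \<subseteq> {M - 2, M - 1}"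
  proof (cases "h i = 0")
    case True
    have "{j. j < M \<and> mu j = mu i} \<subseteq> {0, 1}"
    proof
      fix j assume "j \<in> {j. j < M \<and> mu j = mu i}"
      then have "h j = 0" using True mu_eq by auto
      then have "j - 1 = 0" using M3 by (simp add: h_def min_def split: if_splits)
      then show "j \<in> {0, 1}" by auto
    qed
    then show ?thesis by blast
  next
    case False
    then have hi: "h i = M - 3" using Pi by (simp add: P_def)
    have "{j. j < M \<and> mu j = mu i} \<subseteq> {M - 2, M - 1}"
    proof
      fix j assume j: "j \<in> {j. j < M \<and> mu j = mu i}"
      then have "h j = M - 3" using hi mu_eq by auto
      then have "M - 3 \<le> j - 1" by (simp add: h_def min_def split: if_splits)
      then show "j \<in> {M - 2, M - 1}" using j M5 by auto
    qed
    then show ?thesis by blast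
  qed
  have c1: "card {0::nat, 1} \<le> 2" "card {M - 2, M - 1} \<le> 2" by (auto simp: card_insert_if)
  from sub show ?thesis
  proof
    assume "{j. j < M \<and> mu j = mu i} \<subseteq> {0, 1}"
    from card_mono[OF _ this] c1 show ?thesis by simp
  next
    assume "{j. j < M \<and> mu j = mu i} \<subseteq> {M - 2, M - 1}"
    from card_mono[OF _ this] c1 show ?thesis by simp
  qed
qed

lemma fiber_single: "\<not> P i \<Longrightarrow> i < M \<Longrightarrow> {j. j < M \<and> mu j = mu i} = {i}"
proof -
  assume nP: "\<not> P i" and i: "i < M"
  have hi: "h i = i - 1" "0 < h i" "h i < M - 3" using nP unfolding P_def h_def by (auto simp: min_def split: if_splits)
  have "j = i" if j: "j < M" "mu j = mu i" for j
  proof -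
    have hj: "h j = h i" using j mu_eq by auto
    then have "j - 1 = i - 1" using hi by (simp add: h_def min_def split: if_splits)
    moreover have "0 < j" "0 < i" using hi hj h_def by (auto simp: min_def split: if_splits)
    ultimately show "j = i" by simp
  qed
  then show ?thesis using i by auto
qed

lemma own: "i < M \<Longrightarrow> V i \<le> audience q M mu i"
proof -
  assume i: "i < M"
  show ?thesis
  proof (cases "P i")
    case True
    define k where "k = real (card {j. j < M \<and> mu j = mu i})"
    have k: "1 \<le> k" "k \<le> 2" using card_fiber_pos[OF i, of mu] fiber_pair[OF True] by (auto simp: k_def)
    have "audience q M mu i = measure lborel (aset q M mu i) / k" by (simp add: audience_aset k_def)
    moreover have "2 * a / 2 \<le> measure lborel (aset q M mu i) / k"
      using own_meas[of i] k a0 by (intro frac_le) auto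
    ultimately show ?thesis using True by (simp add: V_def)
  next
    case False
    have "audience q M mu i = measure lborel (aset q M mu i)"
      by (simp add: audience_aset fiber_single[OF False i])
    then show ?thesis using False own_meas[of i] by (simp add: V_def)
  qed
qed

lemma gap_mu: "i < M \<Longrightarrow> gapD M mu i (2 * V i)"
  unfolding gapD_def
proof (intro allI impI)
  fix j1 j2 assume i: "i < M" and j: "j1 < M" "j2 < M" "j1 \<noteq> i" "j2 \<noteq> i" "mu j1 < mu j2"
    and btw: "\<forall>l<M. l \<noteq> i \<longrightarrow> mu l \<le> mu j1 \<or> mu j2 \<le> mu l"
  have hlt: "h j1 < h j2"
  proof (rule ccontr)
    assume "\<not> h j1 < h j2"
    then have "h j2 \<le> h j1" by simp
    then have "G (h j2) \<le> G (h j1)" using G_strict[of "h j2" "h j1"] by (cases "h j2 = h j1") auto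
    then show False using j(5) by (simp add: mu_def)
  qed
  have nb: "\<And>t. h j1 < t \<Longrightarrow> t < h j2 \<Longrightarrow> t + 1 = i"
  proof (rule ccontr)
    fix t assume t: "h j1 < t" "t < h j2" and ne: "t + 1 \<noteq> i"
    have tN: "t \<le> M - 3" using t h_le[of j2] by simp
    have l: "t + 1 < M" using tN M5 by simp
    have "mu (t + 1) = G t" using h_succ[OF tN] by (simp add: mu_def)
    then have "mu j1 < mu (t + 1)" "mu (t + 1) < mu j2" using t G_strict unfolding mu_def by auto
    then show False using btw l ne by force
  qed
  show "mu j2 - mu j1 \<le> 2 * V i"
  proof (cases "P i")
    case True
    have "h j2 \<le> h j1 + 1"
    proof (rule ccontr)
      assume "\<not> ?thesis"
      then have "h j1 < h j1 + 1" "h j1 + 1 < h j2" by auto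
      from nb[OF this] have "h i = h j1 + 1" using h_succ[of "h j1 + 1"] h_le[of j2] \<open>h j1 + 1 < h j2\<close> by auto
      then show False using True \<open>h j1 + 1 < h j2\<close> h_le[of j2] unfolding P_def by auto
    qed
    then have "real (h j2) - real (h j1) \<le> 1" by linarith
    then have "2 * a * (real (h j2) - real (h j1)) \<le> 2 * a * 1" using a0 by (intro mult_left_mono) auto
    then show ?thesis using True unfolding mu_def G_diff V_def by simp
  next
    case False
    have "h j2 \<le> h j1 + 2"
    proof (rule ccontr)
      assume "\<not> ?thesis"
      then have "h j1 < h j1 + 1" "h j1 + 1 < h j2" "h j1 < h j1 + 2" "h j1 + 2 < h j2" by auto
      from nb[OF this(1,2)] nb[OF this(3,4)] show False by simp
    qed
    then have "real (h j2) - real (h j1) \<le> 2" by linarith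
    then have "2 * a * (real (h j2) - real (h j1)) \<le> 2 * a * 2" using a0 by (intro mult_left_mono) auto
    then show ?thesis using False unfolding mu_def G_diff V_def by simp
  qed
qed

lemma dev_mu:
  assumes i: "i < M" and y: "0 \<le> y" "y \<le> 1"
  shows "audience q M (mu(i:=y)) i \<le> V i"
proof -
  define j0 where "j0 = (if i = 0 then 1 else (0::nat))"
  define jN where "jN = (if i = M - 1 then M - 2 else M - 1)"
  have j0: "j0 < M" "j0 \<noteq> i" "mu j0 = a" using M5 by (auto simp: j0_def mu_def h_def G_def)
  have jN: "jN < M" "jN \<noteq> i" "mu jN = 1 - a" using M5 G_N by (auto simp: jN_def mu_def h_def)
  have Va: "a \<le> 2 * V i / 2" using a0 by (simp add: V_def)
  have "audience q M (mu(i:=y)) i \<le> 2 * V i / 2"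
    by (rule dev_generic[OF i y q1 gap_mu[OF i] j0 jN]) (use a0 Va mu_range in auto)
  then show ?thesis by simp
qed

lemma mu_eq_equilibrium: "equilibrium q M mu"
  unfolding equilibrium_def
proof (intro conjI allI impI ballI)
  show "valid_profile M mu" by (rule mu_valid)
  fix i y assume i: "i < M" and y: "y \<in> {0..1::real}"
  show "audience q M (mu(i:=y)) i \<le> audience q M mu i"
  proof -
    have "0 \<le> y" "y \<le> 1" using y by auto
    from order_trans[OF dev_mu[OF i this] own[OF i]] show ?thesis .
  qed
qed

lemma mu_in_Psi: "mu \<in> Psi q M" and mu_0: "mu 0 = a"
  using mu_eq_equilibrium by (auto simp: Psi_def mu_def h_def G_def)

end

lemma mu_fr_eq:
  assumes M5: "M > 5" and q0: "0 \<le> q" and q1: "q \<le> 1"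
  shows "mu_fr q M = min (1 - q) (1 / (2 * (real M - 2)))"
proof -
  define S where "S = {\<mu> m | \<mu> m. \<mu> \<in> Psi q M \<and> m < M}"
  define F where "F = min (1 - q) (1 / (2 * (real M - 2)))"
  have mem: "F \<in> S"
  proof (cases "1 - q < 1 / (2 * (real M - 2))")
    case True
    interpret gr: grid q M "1 - q" "(1 - 2 * (1 - q)) / (real M - 1)"
      by unfold_locales (use M5 q0 q1 True in auto)
    have "gr.g 0 = F" using True gr.g_0 by (simp add: F_def)
    then show ?thesis unfolding S_def using gr.g_in_Psi M5 by force
  next
    case False
    interpret ht: hot q M "1 - q" "1 / (2 * (real M - 2))"
      by unfold_locales (use M5 q0 q1 False in auto)
    have "ht.mu 0 = F" using False ht.mu_0 by (simp add: F_def)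
    then show ?thesis unfolding S_def using ht.mu_in_Psi M5 by force
  qed
  have low: "\<And>x. x \<in> S \<Longrightarrow> F \<le> x"
  proof -
    fix x assume "x \<in> S"
    then obtain \<mu> m where "\<mu> \<in> Psi q M" "m < M" "x = \<mu> m" unfolding S_def by blast
    then show "F \<le> x" unfolding F_def using lower_bound[of q M \<mu> m] q0 q1 M5 by (simp add: Psi_def)
  qed
  have "Inf S = F" by (rule cInf_eq_minimum[OF mem low])
  then show ?thesis unfolding mu_fr_def S_def F_def .
qed

theorem proposition6:
  fixes M :: nat and q1 q2 :: real
  assumes "M > 5" and "0 \<le> q1" and "q1 \<le> q2" and "q2 \<le> 1"
  shows "mu_fr q2 M \<le> mu_fr q1 M"
proof -
  have "mu_fr q2 M = min (1 - q2) (1 / (2 * (real M - 2)))" by (rule mu_fr_eq) (use assms in auto)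
  moreover have "mu_fr q1 M = min (1 - q1) (1 / (2 * (real M - 2)))" by (rule mu_fr_eq) (use assms in auto)
  ultimately show ?thesis using assms(3) by simp
qed

end
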